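(* Let a domain $v$ be a triple $(\mu^{(v)}, f^{(v)}, g^{(v)})$ with $\mu^{(v)}$ a distribution on inputs $\bm{x}\in\mathbb{R}^d$, $f^{(v)}:\mathbb{R}^d\to\mathbb{R}^{d'}$ ($d'\le d$) a representation function and $g^{(v)}:\mathbb{R}^{d'}\to\mathcal{Y}$ a stochastic labeling function; write $h^{(v)}=g^{(v)}\circ f^{(v)}$. Let $u$ be the unseen domain and $s$ a seen domain. For a hypothesis $h=g\circ f$ with $f:\mathbb{R}^d\to\mathbb{R}^{d'}$, $g:\mathbb{R}^{d'}\to\mathcal{Y}$, define the risk $R^{(v)}(h):=\mathbb{E}_{\bm{x}\sim\mu^{(v)}}[\ell(h(\bm{x}),h^{(v)}(\bm{x}))]$. Assume (i) the loss $\ell(\cdot,\cdot)$ is non-negative, symmetric, bounded by a finite positive number $L$, and satisfies the triangle inequality; and (ii) the representation function $f$ is invertible when restricted to the (intrinsically low-dimensional) data manifold, i.e. on the support of the input distributions. Then for any such hypothesis $h=g\circ f$, \[ R^{(u)}(h)\le R^{(s)}(h)+L\,\|f_{\#}\mu^{(u)}-f_{\#}\mu^{(s)}\|_1+\sigma^{(u,s)}, \] where $f_{\#}\mu^{(v)}$ is the pushforward of $\mu^{(v)}$ under $f$ (the distribution of $f(\bm{x})$ with $\bm{x}\sim\mu^{(v)}$), $\|f_{\#}\mu^{(u)}-f_{\#}\mu^{(s)}\|_1=\int|f_{\#}\mu^{(u)}-f_{\#}\mu^{(s)}|\,d\bm{x}$ is the $L^1$ distance between the pushforwards, and \[ \sigma^{(u,s)}:=\min\Big\{\mathbb{E}_{\bm{x}\sim\mu^{(u)}}[\ell(h^{(u)}(\bm{x}),h^{(s)}(\bm{x}))],\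 \mathbb{E}_{\bm{x}\sim\mu^{(s)}}[\ell(h^{(u)}(\bm{x}),h^{(s)}(\bm{x}))]\Big\}. \]
   Context: Domain generalization setting with one unseen domain $u$ and seen domains. $\sigma^{(u,s)}$ does not depend on the learned hypothesis $h$. The invertibility of $f$ is used to rewrite expectations over $\bm{x}$ as expectations over $\bm{z}=f(\bm{x})$ via $\bm{x}=f^{-1}(\bm{z})$. *)

theory Defs
  imports "HOL-Probability.Probability"
begin

definition risk :: "'a measure \<Rightarrow> ('y \<Rightarrow> 'y \<Rightarrow> real) \<Rightarrow> ('a \<Rightarrow> 'y) \<Rightarrow> ('a \<Rightarrow> 'y) \<Rightarrow> real" where
  "risk \<mu> loss hv h = (\<integral>x. loss (h x) (hv x) \<partial>\<mu>)"

definition sigma_us :: "'a measure \<Rightarrow> 'a measure \<Rightarrow> ('y \<Rightarrow> 'y \<Rightarrow> real) \<Rightarrow> ('a \<Rightarrow> 'y) \<Rightarrow> ('a \<Rightarrow> 'y) \<Rightarrow> real" where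
  "sigma_us \<mu>u \<mu>s loss hu hs =
     min (\<integral>x. loss (hu x) (hs x) \<partial>\<mu>u) (\<integral>x. loss (hu x) (hs x) \<partial>\<mu>s)"

definition l1_dist :: "('b::euclidean_space \<Rightarrow> real) \<Rightarrow> ('b \<Rightarrow> real) \<Rightarrow> real" where
  "l1_dist p q = (\<integral>z. \<bar>p z - q z\<bar> \<partial>lborel)"

definition pushforward_density :: "'a measure \<Rightarrow> ('a \<Rightarrow> 'b::euclidean_space) \<Rightarrow> ('b \<Rightarrow> real) \<Rightarrow> bool" where
  "pushforward_density \<mu> f p \<longleftrightarrow>
     p \<in> borel_measurable borel \<and> (\<forall>z. 0 \<le> p z) \<and>
     distr \<mu> borel f = density lborel (\<lambda>z. ennreal (p z))"

end

theory Submission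
  imports Defs
begin

lemma loss_comp_meas:
  assumes "(\<lambda>(a, b). loss a b) \<in> borel_measurable (Y \<Otimes>\<^sub>M Y)"
    and "a \<in> measurable N Y" "b \<in> measurable N Y"
  shows "(\<lambda>x. (loss (a x) (b x) :: real)) \<in> borel_measurable N"
proof -
  have "(\<lambda>x. (a x, b x)) \<in> measurable N (Y \<Otimes>\<^sub>M Y)"
    using assms by (intro measurable_Pair)
  from measurable_comp[OF this assms(1)] show ?thesis by (simp add: o_def)
qed

lemma push_int:
  fixes f :: "'a::topological_space \<Rightarrow> 'b::euclidean_space" and \<psi> :: "'b \<Rightarrow> real"
  assumes P: "prob_space M" and sM: "sets M = sets borel"
    and pf: "pushforward_density M f p" and fm: "f \<in> borel_measurable borel"
    and pm: "\<psi> \<in> borel_measurable borel" and bd: "\<And>z. \<bar>\<psi> z\<bar> \<le> B"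
  shows "(\<integral>x. \<psi> (f x) \<partial>M) = (\<integral>z. p z * \<psi> z \<partial>lborel)"
    and "integrable lborel (\<lambda>z. p z * \<psi> z)"
    and "integrable lborel p"
proof -
  have fM: "f \<in> borel_measurable M" by (metis fm measurable_cong_sets sM)
  have pb: "p \<in> borel_measurable borel" and pn: "\<And>z. 0 \<le> p z"
    and dd: "distr M borel f = density lborel (\<lambda>z. ennreal (p z))"
    using pf unfolding pushforward_density_def by auto
  have pl: "p \<in> borel_measurable lborel" using pb by simp
  have psl: "\<psi> \<in> borel_measurable lborel" using pm by simp
  have "prob_space (distr M borel f)"
    using prob_space.prob_space_distr[OF P fM] .
  then have PD: "prob_space (density lborel (\<lambda>z. ennreal (p z)))" using dd by simp
  have "(\<integral>x. \<psi> (f x) \<partial>M) = (\<integral>z. \<psi> z \<partial>distr M borel f)"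
    by (rule integral_distr[symmetric, OF fM pm])
  also have "\<dots> = (\<integral>z. \<psi> z \<partial>density lborel (\<lambda>z. ennreal (p z)))" using dd by simp
  also have "\<dots> = (\<integral>z. p z * \<psi> z \<partial>lborel)"
    using integral_density[OF psl pl] pn by simp
  finally show "(\<integral>x. \<psi> (f x) \<partial>M) = (\<integral>z. p z * \<psi> z \<partial>lborel)" .
  have "integrable (density lborel (\<lambda>z. ennreal (p z))) \<psi>"
    using prob_space.finite_measure[OF PD] psl bd
    by (intro finite_measure.integrable_const_bound[where B=B]) auto
  then show "integrable lborel (\<lambda>z. p z * \<psi> z)"
    using integrable_density[OF psl pl] pn by simp
  have "integrable (density lborel (\<lambda>z. ennreal (p z))) (\<lambda>_. 1::real)"
    using prob_space.finite_measure[OF PD]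
    by (intro finite_measure.integrable_const_bound[where B=1]) auto
  then show "integrable lborel p"
    using integrable_density[OF _ pl, of "\<lambda>_. 1::real"] pn by simp
qed


lemma meas_sets_borel:
  assumes "sets M = sets borel" "g \<in> measurable borel N"
  shows "g \<in> measurable M N"
  using assms(2) measurable_cong_sets[OF assms(1) refl, of N] by simp

lemma transfer:
  fixes f :: "'a::topological_space \<Rightarrow> 'b::euclidean_space" and \<psi> :: "'b \<Rightarrow> real"
    and \<phi> :: "'a \<Rightarrow> real"
  assumes P1: "prob_space M1" and s1: "sets M1 = sets borel"
    and P2: "prob_space M2" and s2: "sets M2 = sets borel"
    and pf1: "pushforward_density M1 f p1" and pf2: "pushforward_density M2 f p2"
    and fm: "f \<in> borel_measurable borel"
    and Sm: "S \<in> sets borel" and S1: "emeasure M1 S = 1" and S2: "emeasure M2 S = 1"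
    and \<phi>m: "\<phi> \<in> borel_measurable borel" and \<psi>m: "\<psi> \<in> borel_measurable borel"
    and \<psi>nn: "\<And>z. 0 \<le> \<psi> z" and \<psi>bd: "\<And>z. \<psi> z \<le> L"
    and eq: "\<And>x. x \<in> S \<Longrightarrow> \<phi> x = \<psi> (f x)"
  shows "(\<integral>x. \<phi> x \<partial>M1) \<le> (\<integral>x. \<phi> x \<partial>M2) + L * l1_dist p1 p2"
proof -
  have bd: "\<And>z. \<bar>\<psi> z\<bar> \<le> L" using \<psi>nn \<psi>bd by (simp add: abs_le_iff)
  have c1: "(\<integral>x. \<phi> x \<partial>M1) = (\<integral>x. \<psi> (f x) \<partial>M1)"
  proof (rule integral_cong_AE)
    show "\<phi> \<in> borel_measurable M1" by (rule meas_sets_borel[OF s1 \<phi>m])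
    show "(\<lambda>x. \<psi> (f x)) \<in> borel_measurable M1"
      using meas_sets_borel[OF s1 measurable_comp[OF fm \<psi>m]] by (simp add: comp_def)
    have "prob_space.prob M1 S = 1" using S1 by (simp add: measure_def)
    then have "AE x in M1. x \<in> S" by (rule prob_space.AE_prob_1[OF P1])
    then show "AE x in M1. \<phi> x = \<psi> (f x)" using eq by auto
  qed
  have c2: "(\<integral>x. \<phi> x \<partial>M2) = (\<integral>x. \<psi> (f x) \<partial>M2)"
  proof (rule integral_cong_AE)
    show "\<phi> \<in> borel_measurable M2" by (rule meas_sets_borel[OF s2 \<phi>m])
    show "(\<lambda>x. \<psi> (f x)) \<in> borel_measurable M2"
      using meas_sets_borel[OF s2 measurable_comp[OF fm \<psi>m]] by (simp add: comp_def)
    have "prob_space.prob M2 S = 1" using S2 by (simp add: measure_def)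
    then have "AE x in M2. x \<in> S" by (rule prob_space.AE_prob_1[OF P2])
    then show "AE x in M2. \<phi> x = \<psi> (f x)" using eq by auto
  qed
  note A1 = push_int[OF P1 s1 pf1 fm \<psi>m bd]
  note A2 = push_int[OF P2 s2 pf2 fm \<psi>m bd]
  have "(\<integral>x. \<phi> x \<partial>M1) - (\<integral>x. \<phi> x \<partial>M2)
      = (\<integral>z. p1 z * \<psi> z \<partial>lborel) - (\<integral>z. p2 z * \<psi> z \<partial>lborel)"
    using c1 c2 A1(1) A2(1) by simp
  also have "\<dots> = (\<integral>z. p1 z * \<psi> z - p2 z * \<psi> z \<partial>lborel)"
    using A1(2) A2(2) by simp
  also have "\<dots> \<le> (\<integral>z. L * \<bar>p1 z - p2 z\<bar> \<partial>lborel)"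
  proof (rule integral_mono)
    show "integrable lborel (\<lambda>z. p1 z * \<psi> z - p2 z * \<psi> z)" using A1(2) A2(2) by simp
    show "integrable lborel (\<lambda>z. L * \<bar>p1 z - p2 z\<bar>)" using A1(3) A2(3) by simp
    fix z
    have "p1 z * \<psi> z - p2 z * \<psi> z = (p1 z - p2 z) * \<psi> z" by (simp add: algebra_simps)
    also have "\<dots> \<le> \<bar>p1 z - p2 z\<bar> * \<psi> z" using \<psi>nn[of z] by (intro mult_right_mono) auto
    also have "\<dots> \<le> \<bar>p1 z - p2 z\<bar> * L" using \<psi>bd[of z] by (intro mult_left_mono) auto
    finally show "p1 z * \<psi> z - p2 z * \<psi> z \<le> L * \<bar>p1 z - p2 z\<bar>" by (simp add: mult.commute)
  qed
  also have "\<dots> = L * l1_dist p1 p2" unfolding l1_dist_def by simp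
  finally show ?thesis by simp
qed


lemma intg:
  assumes P: "prob_space M" and sM: "sets M = sets borel"
    and lm: "(\<lambda>(a, b). loss a b) \<in> borel_measurable (Y \<Otimes>\<^sub>M Y)"
    and a: "a \<in> measurable borel Y" and b: "b \<in> measurable borel Y"
    and nn: "\<And>a b. 0 \<le> loss a b" and bd: "\<And>a b. loss a b \<le> (L::real)"
  shows "integrable M (\<lambda>x. loss (a x) (b x))"
proof -
  have m: "(\<lambda>x. loss (a x) (b x)) \<in> borel_measurable M"
    using meas_sets_borel[OF sM loss_comp_meas[OF lm a b]] .
  show ?thesis
    using prob_space.finite_measure[OF P] m nn bd
    by (intro finite_measure.integrable_const_bound[where B=L]) auto
qed

theorem lemma1:
  fixes \<mu>u \<mu>s :: "'a::euclidean_space measure"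
    and Y :: "'y measure"
    and f :: "'a \<Rightarrow> 'b::euclidean_space" and g :: "'b \<Rightarrow> 'y"
    and hu hs :: "'a \<Rightarrow> 'y"
    and loss :: "'y \<Rightarrow> 'y \<Rightarrow> real" and L :: real
    and pu ps :: "'b \<Rightarrow> real"
  assumes dim: "DIM('b) \<le> DIM('a)"
    and prob_u: "prob_space \<mu>u" and sets_u: "sets \<mu>u = sets borel"
    and prob_s: "prob_space \<mu>s" and sets_s: "sets \<mu>s = sets borel"
    and hu_meas: "hu \<in> measurable borel Y" and hs_meas: "hs \<in> measurable borel Y"
    and f_meas: "f \<in> borel_measurable borel" and g_meas: "g \<in> measurable borel Y"
    and loss_meas: "(\<lambda>(a, b). loss a b) \<in> borel_measurable (Y \<Otimes>\<^sub>M Y)"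
    and loss_nonneg: "\<And>a b. 0 \<le> loss a b"
    and loss_sym: "\<And>a b. loss a b = loss b a"
    and L_pos: "0 < L"
    and loss_bdd: "\<And>a b. loss a b \<le> L"
    and loss_tri: "\<And>a b c. loss a c \<le> loss a b + loss b c"
    and S_meas: "S \<in> sets borel"
    and S_u: "emeasure \<mu>u S = 1" and S_s: "emeasure \<mu>s S = 1"
    and finv_meas: "finv \<in> borel_measurable borel"
    and finv_inv: "\<And>x. x \<in> S \<Longrightarrow> finv (f x) = x"
    and pu: "pushforward_density \<mu>u f pu"
    and ps: "pushforward_density \<mu>s f ps"
  shows "risk \<mu>u loss hu (g \<circ> f)
           \<le> risk \<mu>s loss hs (g \<circ> f) + L * l1_dist pu ps + sigma_us \<mu>u \<mu>s loss hu hs"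
proof -
  have gf: "g \<circ> f \<in> measurable borel Y" using measurable_comp[OF f_meas g_meas] .
  have I: "\<And>M a b. prob_space M \<Longrightarrow> sets M = sets borel \<Longrightarrow> a \<in> measurable borel Y
      \<Longrightarrow> b \<in> measurable borel Y \<Longrightarrow> integrable M (\<lambda>x. loss (a x) (b x))"
    using intg[OF _ _ loss_meas _ _ loss_nonneg loss_bdd] by blast
  have TR: "\<And>hv :: 'a \<Rightarrow> 'y. hv \<in> measurable borel Y \<Longrightarrow>
     (\<integral>x. loss ((g \<circ> f) x) (hv x) \<partial>\<mu>u) \<le> (\<integral>x. loss ((g \<circ> f) x) (hv x) \<partial>\<mu>s) + L * l1_dist pu ps"
  proof -
    fix hv :: "'a \<Rightarrow> 'y" assume hv: "hv \<in> measurable borel Y"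
    have hvf: "hv \<circ> finv \<in> measurable borel Y" using measurable_comp[OF finv_meas hv] .
    show "(\<integral>x. loss ((g \<circ> f) x) (hv x) \<partial>\<mu>u) \<le> (\<integral>x. loss ((g \<circ> f) x) (hv x) \<partial>\<mu>s) + L * l1_dist pu ps"
    proof (rule transfer[OF prob_u sets_u prob_s sets_s pu ps f_meas S_meas S_u S_s,
          where \<psi>="\<lambda>z. loss (g z) ((hv \<circ> finv) z)"])
      show "(\<lambda>x. loss ((g \<circ> f) x) (hv x)) \<in> borel_measurable borel"
        by (rule loss_comp_meas[OF loss_meas gf hv])
      show "(\<lambda>z. loss (g z) ((hv \<circ> finv) z)) \<in> borel_measurable borel"
        by (rule loss_comp_meas[OF loss_meas g_meas hvf])
    qed (auto simp: loss_nonneg loss_bdd finv_inv)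
  qed
  have tri: "\<And>M. prob_space M \<Longrightarrow> sets M = sets borel \<Longrightarrow>
     (\<integral>x. loss ((g \<circ> f) x) (hu x) \<partial>M) \<le> (\<integral>x. loss ((g \<circ> f) x) (hs x) \<partial>M) + (\<integral>x. loss (hu x) (hs x) \<partial>M)"
  proof -
    fix M :: "'a measure" assume P: "prob_space M" and sM: "sets M = sets borel"
    have "(\<integral>x. loss ((g \<circ> f) x) (hu x) \<partial>M) \<le> (\<integral>x. loss ((g \<circ> f) x) (hs x) + loss (hu x) (hs x) \<partial>M)"
    proof (rule integral_mono)
      show "integrable M (\<lambda>x. loss ((g \<circ> f) x) (hu x))" using I[OF P sM gf hu_meas] .
      show "integrable M (\<lambda>x. loss ((g \<circ> f) x) (hs x) + loss (hu x) (hs x))"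
        using I[OF P sM gf hs_meas] I[OF P sM hu_meas hs_meas] by simp
      fix x show "loss ((g \<circ> f) x) (hu x) \<le> loss ((g \<circ> f) x) (hs x) + loss (hu x) (hs x)"
        using loss_tri[where a="(g \<circ> f) x" and b="hs x" and c="hu x"] loss_sym[of "hs x" "hu x"] by simp
    qed
    also have "\<dots> = (\<integral>x. loss ((g \<circ> f) x) (hs x) \<partial>M) + (\<integral>x. loss (hu x) (hs x) \<partial>M)"
      using I[OF P sM gf hs_meas] I[OF P sM hu_meas hs_meas] by simp
    finally show "(\<integral>x. loss ((g \<circ> f) x) (hu x) \<partial>M) \<le> (\<integral>x. loss ((g \<circ> f) x) (hs x) \<partial>M) + (\<integral>x. loss (hu x) (hs x) \<partial>M)" .
  qed
  have b1: "risk \<mu>u loss hu (g \<circ> f) \<le> risk \<mu>s loss hs (g \<circ> f) + L * l1_dist pu ps + (\<integral>x. loss (hu x) (hs x) \<partial>\<mu>u)"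
    using tri[OF prob_u sets_u] TR[OF hs_meas] unfolding risk_def by linarith
  have b2: "risk \<mu>u loss hu (g \<circ> f) \<le> risk \<mu>s loss hs (g \<circ> f) + L * l1_dist pu ps + (\<integral>x. loss (hu x) (hs x) \<partial>\<mu>s)"
    using tri[OF prob_s sets_s] TR[OF hu_meas] unfolding risk_def by linarith
  show ?thesis using b1 b2 unfolding sigma_us_def min_def by auto
qed

end
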